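(* Let $\mathcal{H}$ be a complex Hilbert space, $A\in\mathcal{B}(\mathcal{H})$ positive and $S\in\mathcal{B}_A(\mathcal{H})$. Then for every $\theta\in\mathbb{R}$, $$d\omega_A^2(S)\le\omega_A^2\left(e^{i\theta}S+S^{\sharp_A}S\right)+2\|S\|_A^2\left\|\Re_A\left(e^{i\theta}S\right)\right\|_A .$$
   Context: $\mathcal{B}(\mathcal{H})$ denotes the bounded linear operators on $\mathcal{H}$. For positive $A$, $\langle x,z\rangle_A=\langle Ax,z\rangle$ and $\|z\|_A=\|A^{1/2}z\|$. $\mathcal{B}_A(\mathcal{H})$ is the set of $S\in\mathcal{B}(\mathcal{H})$ for which some $R\in\mathcal{B}(\mathcal{H})$ satisfies $AR=S^*A$; for such $S$, $S^{\sharp_A}=A^{\dagger}S^*A$ with $A^\dagger$ the Moore–Penrose inverse of $A$. $\Re_A(T)=\frac{T+T^{\sharp_A}}{2}$. For operators $T$ bounded with respect to $\|\cdot\|_A$: $\|T\|_A=\sup_{\|z\|_A=1}\|Tz\|_A$, $\omega_A(T)=\sup_{\|z\|_A=1}|\langle Tz,z\rangle_A|$, and $d\omega_A(T)=\sup_{\|z\|_A=1}(|\langle Tz,z\rangle_A|^2+\|Tz\|_A^4)^{1/2}$. *)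

theory Defs
  imports "HOL-Analysis.Analysis"
begin

class complex_inner_space = real_normed_vector +
  fixes scaleC :: "complex \<Rightarrow> 'a \<Rightarrow> 'a"
    and cinner :: "'a \<Rightarrow> 'a \<Rightarrow> complex"
  assumes scaleC_add_right: "scaleC a (x + y) = scaleC a x + scaleC a y"
    and scaleC_add_left: "scaleC (a + b) x = scaleC a x + scaleC b x"
    and scaleC_scaleC: "scaleC a (scaleC b x) = scaleC (a * b) x"
    and scaleC_one: "scaleC 1 x = x"
    and scaleR_scaleC: "scaleR r x = scaleC (complex_of_real r) x"
    and cinner_commute: "cinner x y = cnj (cinner y x)"
    and cinner_add_left: "cinner (x + y) z = cinner x z + cinner y z"
    and cinner_scaleC_left: "cinner (scaleC a x) y = a * cinner x y"
    and cinner_ge_zero: "0 \<le> Re (cinner x x)"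
    and cinner_eq_zero_iff: "cinner x x = 0 \<longleftrightarrow> x = 0"
    and norm_eq_sqrt_cinner: "norm x = sqrt (Re (cinner x x))"

class chilbert_space = complex_inner_space + complete_space

definition bounded_op :: "('a::complex_inner_space \<Rightarrow> 'a) \<Rightarrow> bool" where
  "bounded_op T \<longleftrightarrow> bounded_linear T \<and> (\<forall>c x. T (scaleC c x) = scaleC c (T x))"

definition adjoint :: "('a::complex_inner_space \<Rightarrow> 'a) \<Rightarrow> ('a \<Rightarrow> 'a)" where
  "adjoint T = (THE U. \<forall>x y. cinner (T x) y = cinner x (U y))"

definition positive_op :: "('a::complex_inner_space \<Rightarrow> 'a) \<Rightarrow> bool" where
  "positive_op A \<longleftrightarrow> bounded_op A \<and> (\<forall>x. Im (cinner (A x) x) = 0 \<and> 0 \<le> Re (cinner (A x) x))"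

text \<open>B_A(H): operators admitting an A-adjoint.\<close>
definition BA :: "('a::complex_inner_space \<Rightarrow> 'a) \<Rightarrow> ('a \<Rightarrow> 'a) set" where
  "BA A = {S. bounded_op S \<and> (\<exists>R. bounded_op R \<and> A \<circ> R = adjoint S \<circ> A)}"

text \<open>Moore--Penrose inverse of A on its (only relevant) part of the domain, the range of A:
  A^dagger y is the unique preimage of y orthogonal to ker A.\<close>
definition mp_inv :: "('a::complex_inner_space \<Rightarrow> 'a) \<Rightarrow> 'a \<Rightarrow> 'a" where
  "mp_inv A y = (if \<exists>x. A x = y
      then (THE x. A x = y \<and> (\<forall>k. A k = 0 \<longrightarrow> cinner x k = 0)) else 0)"

definition sharpA :: "('a::complex_inner_space \<Rightarrow> 'a) \<Rightarrow> ('a \<Rightarrow> 'a) \<Rightarrow> ('a \<Rightarrow> 'a)" where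
  "sharpA A S = mp_inv A \<circ> adjoint S \<circ> A"

definition ReA :: "('a::complex_inner_space \<Rightarrow> 'a) \<Rightarrow> ('a \<Rightarrow> 'a) \<Rightarrow> ('a \<Rightarrow> 'a)" where
  "ReA A T = (\<lambda>x. scaleR (1/2) (T x + sharpA A T x))"

text \<open>Semi-inner product and seminorm induced by A: ||z||_A = ||A^(1/2) z|| = sqrt <Az,z>.\<close>
definition innerA :: "('a::complex_inner_space \<Rightarrow> 'a) \<Rightarrow> 'a \<Rightarrow> 'a \<Rightarrow> complex" where
  "innerA A x z = cinner (A x) z"

definition normA :: "('a::complex_inner_space \<Rightarrow> 'a) \<Rightarrow> 'a \<Rightarrow> real" where
  "normA A z = sqrt (Re (innerA A z z))"

text \<open>Suprema over the A-unit sphere; all quantities are nonnegative, so 0 is inserted to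
  fix the (degenerate) value when the A-unit sphere is empty (A = 0).\<close>
definition opnormA :: "('a::complex_inner_space \<Rightarrow> 'a) \<Rightarrow> ('a \<Rightarrow> 'a) \<Rightarrow> real" where
  "opnormA A T = Sup (insert 0 {normA A (T z) | z. normA A z = 1})"

definition omegaA :: "('a::complex_inner_space \<Rightarrow> 'a) \<Rightarrow> ('a \<Rightarrow> 'a) \<Rightarrow> real" where
  "omegaA A T = Sup (insert 0 {cmod (innerA A (T z) z) | z. normA A z = 1})"

definition domegaA :: "('a::complex_inner_space \<Rightarrow> 'a) \<Rightarrow> ('a \<Rightarrow> 'a) \<Rightarrow> real" where
  "domegaA A T = Sup (insert 0
     {sqrt ((cmod (innerA A (T z) z))\<^sup>2 + (normA A (T z)) ^ 4) | z. normA A z = 1})"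

end

theory Submission
  imports Defs
begin


context complex_inner_space begin

lemma scaleC_zero_right[simp]: "scaleC a 0 = 0"
proof -
  have "scaleC a 0 + scaleC a 0 = scaleC a 0 + 0" by (simp only: scaleC_add_right[symmetric] add_0_right)
  then show ?thesis by (rule add_left_imp_eq)
qed
lemma scaleC_zero_left[simp]: "scaleC 0 x = 0"
proof -
  have "scaleC 0 x + scaleC 0 x = scaleC (0 + 0) x" by (rule scaleC_add_left[symmetric])
  then have "scaleC 0 x + scaleC 0 x = scaleC 0 x + 0" by simp
  then show ?thesis by (rule add_left_imp_eq)
qed
lemma scaleC_minus_right: "scaleC a (- x) = - scaleC a x"
proof -
  have "scaleC a x + scaleC a (- x) = scaleC a (x + - x)" by (rule scaleC_add_right[symmetric])
  then have "scaleC a x + scaleC a (- x) = 0" by simp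
  then show ?thesis by (simp add: eq_neg_iff_add_eq_0 add.commute)
qed
lemma scaleC_diff_right: "scaleC a (x - y) = scaleC a x - scaleC a y"
  using scaleC_add_right[of a "x - y" y] by (simp add: eq_diff_eq)
lemma scaleC_minus_left: "scaleC (- a) x = - scaleC a x"
proof -
  have "scaleC a x + scaleC (- a) x = scaleC (a + - a) x" by (rule scaleC_add_left[symmetric])
  then have "scaleC a x + scaleC (- a) x = 0" by simp
  then show ?thesis by (simp add: eq_neg_iff_add_eq_0 add.commute)
qed
lemma scaleC_diff_left: "scaleC (a - b) x = scaleC a x - scaleC b x"
  using scaleC_add_left[of "a - b" b x] by (simp add: eq_diff_eq)
lemma scaleC_of_real: "scaleC (complex_of_real r) x = scaleR r x"
  by (simp add: scaleR_scaleC)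

lemma cinner_zero_left[simp]: "cinner 0 y = 0"
proof -
  have "cinner 0 y + cinner 0 y = cinner (0 + 0) y" by (rule cinner_add_left[symmetric])
  then have "cinner 0 y + cinner 0 y = cinner 0 y + 0" by simp
  then show ?thesis by simp
qed
lemma cinner_diff_left: "cinner (x - y) z = cinner x z - cinner y z"
  using cinner_add_left[of "x - y" y z] by (simp add: eq_diff_eq)
lemma cinner_minus_left: "cinner (- x) y = - cinner x y"
  using cinner_diff_left[of 0 x y] by simp
lemma cinner_add_right: "cinner x (y + z) = cinner x y + cinner x z"
  by (subst (1 2 3) cinner_commute) (simp add: cinner_add_left)
lemma cinner_scaleC_right: "cinner x (scaleC a y) = cnj a * cinner x y"
  by (subst (1 2) cinner_commute) (simp add: cinner_scaleC_left)
lemma cinner_zero_right[simp]: "cinner x 0 = 0"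
  by (subst cinner_commute) simp
lemma cinner_diff_right: "cinner x (y - z) = cinner x y - cinner x z"
  by (subst (1 2 3) cinner_commute) (simp add: cinner_diff_left)
lemma cinner_scaleR_left: "cinner (scaleR r x) y = complex_of_real r * cinner x y"
  by (simp add: scaleR_scaleC cinner_scaleC_left)
lemma cinner_scaleR_right: "cinner x (scaleR r y) = complex_of_real r * cinner x y"
  by (simp add: scaleR_scaleC cinner_scaleC_right)
lemma cinner_self_Im: "Im (cinner x x) = 0"
proof -
  have "cinner x x = cnj (cinner x x)" by (rule cinner_commute)
  then have "Im (cinner x x) = Im (cnj (cinner x x))" by (rule arg_cong)
  then show ?thesis by simp
qed
lemma cinner_self_real: "cinner x x = complex_of_real ((norm x)^2)"
  using cinner_self_Im[of x] cinner_ge_zero[of x]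
  by (simp add: norm_eq_sqrt_cinner complex_eq_iff)
lemma norm_sq_cinner: "(norm x)^2 = Re (cinner x x)"
  by (simp add: cinner_self_real)

lemma scaleC_scaleR_comm: "scaleC a (scaleR r x) = scaleR r (scaleC a x)"
  by (simp add: scaleR_scaleC scaleC_scaleC mult.commute)

end


lemma cs_generic:
  fixes B :: "'a::complex_inner_space \<Rightarrow> 'a \<Rightarrow> complex"
  assumes herm: "\<And>x y. B x y = cnj (B y x)"
    and addL: "\<And>x y z. B (x + y) z = B x z + B y z"
    and scL: "\<And>c x y. B (scaleC c x) y = c * B x y"
    and pos: "\<And>x. 0 \<le> Re (B x x)"
  shows "(cmod (B x y))^2 \<le> Re (B x x) * Re (B y y)"
proof -
  have diffL: "B (u - v) w = B u w - B v w" for u v w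
    using addL[of "u - v" v w] by simp
  have diffR: "B w (u - v) = B w u - B w v" for u v w
  proof -
    have "B w (u - v) = cnj (B (u - v) w)" by (rule herm)
    also have "\<dots> = cnj (B u w) - cnj (B v w)" by (simp add: diffL)
    also have "\<dots> = B w u - B w v" by (simp add: herm[of w u] herm[of w v])
    finally show ?thesis .
  qed
  have scR: "B u (scaleC a v) = cnj a * B u v" for a u v
  proof -
    have "B u (scaleC a v) = cnj (B (scaleC a v) u)" by (rule herm)
    also have "\<dots> = cnj a * cnj (B v u)" by (simp add: scL)
    also have "\<dots> = cnj a * B u v" by (simp add: herm[of u v])
    finally show ?thesis .
  qed
  define c where "c = B x y"
  have Byx: "B y x = cnj c" using herm[of y x] c_def by simp
  have cc: "cnj c * c = complex_of_real ((cmod c)^2)"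
    by (subst complex_norm_square) (rule mult.commute)
  have key: "0 \<le> Re (B x x) - 2*t*(cmod c)^2 + t^2 * (cmod c)^2 * Re (B y y)" for t :: real
  proof -
    define a where "a = complex_of_real t * c"
    have "B (x - scaleC a y) (x - scaleC a y) = B x x - cnj a * c - a * (cnj c - cnj a * B y y)"
      by (simp add: diffL diffR scL scR c_def[symmetric] Byx algebra_simps)
    also have "\<dots> = B x x - 2 * complex_of_real t * (cnj c * c) + complex_of_real (t^2) * (cnj c * c) * B y y"
      by (simp add: a_def algebra_simps power2_eq_square)
    finally have "Re (B (x - scaleC a y) (x - scaleC a y)) = Re (B x x) - 2*t*(cmod c)^2 + t^2 * (cmod c)^2 * Re (B y y)"
      by (simp add: cc)
    then show ?thesis using pos by metis
  qed
  show ?thesis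
  proof (cases "Re (B y y) = 0")
    case True
    have "cmod c = 0"
    proof (rule ccontr)
      assume "cmod c \<noteq> 0"
      then have p: "(cmod c)^2 > 0" by simp
      have "0 \<le> Re (B x x) - 2*((Re (B x x) + 1) / (2*(cmod c)^2))*(cmod c)^2"
        using key[of "(Re (B x x) + 1) / (2*(cmod c)^2)"] True by simp
      also have "\<dots> = -1" using p by (simp add: field_simps)
      finally show False by simp
    qed
    then show ?thesis using True c_def by simp
  next
    case False
    then have b: "Re (B y y) > 0" using pos[of y] by simp
    have "0 \<le> Re (B x x) - 2*(1/Re (B y y))*(cmod c)^2 + (1/Re (B y y))^2 * (cmod c)^2 * Re (B y y)"
      using key by blast
    also have "\<dots> = Re (B x x) - (cmod c)^2 / Re (B y y)"
      using b by (simp add: field_simps power2_eq_square)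
    finally have "(cmod c)^2 / Re (B y y) \<le> Re (B x x)" by simp
    then show ?thesis using b c_def by (simp add: divide_le_eq mult.commute)
  qed
qed

lemma cs_sqrt:
  fixes B :: "'a::complex_inner_space \<Rightarrow> 'a \<Rightarrow> complex"
  assumes "\<And>x y. B x y = cnj (B y x)"
    and "\<And>x y z. B (x + y) z = B x z + B y z"
    and "\<And>c x y. B (scaleC c x) y = c * B x y"
    and pos: "\<And>x. 0 \<le> Re (B x x)"
  shows "cmod (B x y) \<le> sqrt (Re (B x x)) * sqrt (Re (B y y))"
proof -
  have "(cmod (B x y))^2 \<le> Re (B x x) * Re (B y y)" by (rule cs_generic[OF assms])
  then have "sqrt ((cmod (B x y))^2) \<le> sqrt (Re (B x x) * Re (B y y))"
    using real_sqrt_le_mono by blast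
  then show ?thesis by (simp add: real_sqrt_mult)
qed

lemma cinner_cs: "cmod (cinner x y) \<le> norm x * norm y"
  for x y :: "'a::complex_inner_space"
  using cs_sqrt[where B=cinner, OF cinner_commute cinner_add_left cinner_scaleC_left cinner_ge_zero, of x y]
  by (simp add: norm_eq_sqrt_cinner)

lemma norm_scaleC: "norm (scaleC a x) = cmod a * norm x"
  for x :: "'a::complex_inner_space"
proof -
  have "(norm (scaleC a x))^2 = Re (cinner (scaleC a x) (scaleC a x))" by (rule norm_sq_cinner)
  also have "\<dots> = Re (cnj a * (a * cinner x x))" by (simp only: cinner_scaleC_left cinner_scaleC_right)
  also have "\<dots> = (cmod a)^2 * (norm x)^2"
  proof -
    have ca: "cnj a * a = complex_of_real ((cmod a)^2)" by (subst complex_norm_square) (rule mult.commute)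
    show ?thesis by (simp only: mult.assoc[symmetric] ca cinner_self_real of_real_mult[symmetric] Re_complex_of_real)
  qed
  also have "\<dots> = (cmod a * norm x)^2" by (simp add: power_mult_distrib)
  finally have "(norm (scaleC a x))^2 = (cmod a * norm x)^2" .
  then show ?thesis by (simp add: power2_eq_iff_nonneg)
qed



lemma re_cinner_swap: "Re (cinner v u) = Re (cinner u v)"
  for u v :: "'a::complex_inner_space"
  by (subst cinner_commute) simp

lemma norm_diff_sq: "(norm (u - v))^2 = (norm u)^2 + (norm v)^2 - 2 * Re (cinner u v)"
  for u v :: "'a::complex_inner_space"
proof -
  have "Re (cinner (u - v) (u - v)) = Re (cinner u u) + Re (cinner v v) - Re (cinner u v) - Re (cinner v u)"
    by (simp add: cinner_diff_left cinner_diff_right)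
  then show ?thesis by (simp add: norm_sq_cinner re_cinner_swap[of v u])
qed

lemma norm_add_sq: "(norm (u + v))^2 = (norm u)^2 + (norm v)^2 + 2 * Re (cinner u v)"
  for u v :: "'a::complex_inner_space"
proof -
  have "Re (cinner (u + v) (u + v)) = Re (cinner u u) + Re (cinner v v) + Re (cinner u v) + Re (cinner v u)"
    by (simp add: cinner_add_left cinner_add_right)
  then show ?thesis by (simp add: norm_sq_cinner re_cinner_swap[of v u])
qed

lemma proj_exists:
  fixes M :: "'a::chilbert_space set" and x :: 'a
  assumes cl: "closed M" and z: "0 \<in> M" and add: "\<And>u v. u \<in> M \<Longrightarrow> v \<in> M \<Longrightarrow> u + v \<in> M"
    and sc: "\<And>c u. u \<in> M \<Longrightarrow> scaleC c u \<in> M"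
  shows "\<exists>m\<in>M. \<forall>k\<in>M. cinner (x - m) k = 0"
proof -
  define D where "D = (\<lambda>m. norm (x - m)) ` M"
  define d where "d = Inf D"
  have Dne: "D \<noteq> {}" using z D_def by auto
  have Dbdd: "bdd_below D" unfolding D_def by (rule bdd_belowI[of _ 0]) auto
  have d0: "0 \<le> d" unfolding d_def using Dne by (intro cInf_greatest) (auto simp: D_def)
  have dle: "d \<le> norm (x - m)" if "m \<in> M" for m
    unfolding d_def using Dbdd that by (intro cInf_lower) (auto simp: D_def)
  define \<delta> where "\<delta> = (\<lambda>n::nat. inverse (real (Suc n)))"
  have \<delta>pos: "0 < \<delta> n" for n unfolding \<delta>_def by simp
  have \<delta>le1: "\<delta> n \<le> 1" for n unfolding \<delta>_def by (simp add: field_simps)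
  have \<delta>mono: "n \<le> k \<Longrightarrow> \<delta> k \<le> \<delta> n" for n k unfolding \<delta>_def
    by (simp add: le_imp_inverse_le)
  have "\<exists>m\<in>M. norm (x - m) < d + \<delta> n" for n
  proof -
    have "Inf D < d + \<delta> n" using d_def \<delta>pos[of n] by simp
    then show ?thesis using cInf_less_iff[OF Dne Dbdd] D_def by auto
  qed
  then obtain s where sM: "\<And>n. s n \<in> M" and sn: "\<And>n. norm (x - s n) < d + \<delta> n" by metis
  have halfM: "scaleR (1/2) (u + v) \<in> M" if "u \<in> M" "v \<in> M" for u v
    using sc[OF add[OF that], of "complex_of_real (1/2)"] by (simp add: scaleR_scaleC)
  have bound: "(norm (s n - s k))^2 \<le> 2 * (2*d+1) * (\<delta> n + \<delta> k)" for n k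
  proof -
    define u where "u = x - s n"
    define v where "v = x - s k"
    have uv: "u + v = scaleR 2 (x - scaleR (1/2) (s n + s k))"
      unfolding u_def v_def by (simp add: algebra_simps scaleR_2)
    have "2 * d \<le> 2 * norm (x - scaleR (1/2) (s n + s k))"
      using dle[OF halfM[OF sM sM]] by simp
    also have "\<dots> = norm (u + v)" using uv by simp
    finally have "2 * d \<le> norm (u + v)" .
    then have "(2 * d)^2 \<le> (norm (u + v))^2"
      using d0 by (intro power_mono) auto
    then have A: "4 * d^2 \<le> (norm (u + v))^2" by (simp add: power_mult_distrib)
    have para: "(norm (u + v))^2 + (norm (u - v))^2 = 2 * (norm u)^2 + 2 * (norm v)^2"
      by (simp add: norm_add_sq norm_diff_sq)
    have nu: "(norm u)^2 \<le> (d + \<delta> n)^2" using sn[of n] u_def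
      by (simp add: power_mono)
    have nv: "(norm v)^2 \<le> (d + \<delta> k)^2" using sn[of k] v_def
      by (simp add: power_mono)
    have e1: "(d + \<delta> n)^2 \<le> d^2 + (2*d+1) * \<delta> n"
      using \<delta>pos[of n] \<delta>le1[of n] d0 by (simp add: power2_eq_square algebra_simps mult_left_le)
    have e2: "(d + \<delta> k)^2 \<le> d^2 + (2*d+1) * \<delta> k"
      using \<delta>pos[of k] \<delta>le1[of k] d0 by (simp add: power2_eq_square algebra_simps mult_left_le)
    have "u - v = s k - s n" unfolding u_def v_def by simp
    then have "norm (s n - s k) = norm (u - v)" by (simp add: norm_minus_commute)
    then show ?thesis using A para nu nv e1 e2 by (simp add: algebra_simps)
  qed
  have "Cauchy s"
  proof (rule metric_CauchyI)
    fix e :: real assume e: "0 < e"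
    obtain N where N: "4 * (2*d+1) / e^2 < real N" using reals_Archimedean2 by blast
    have "4 * (2*d+1) * \<delta> N < e^2"
    proof -
      have e2: "0 < e^2" using e by simp
      have "4 * (2*d+1) < e^2 * real N" using N e2 by (simp add: field_simps)
      moreover have "e^2 * real (Suc N) = e^2 * real N + e^2" by (simp add: algebra_simps)
      ultimately have "4 * (2*d+1) < e^2 * real (Suc N)" using e2 by linarith
      then show ?thesis unfolding \<delta>_def using e by (simp add: field_simps)
    qed
    have "dist (s m) (s n) < e" if "m \<ge> N" "n \<ge> N" for m n
    proof -
      have "(norm (s m - s n))^2 \<le> 2 * (2*d+1) * (\<delta> m + \<delta> n)" by (rule bound)
      also have "\<dots> \<le> 2 * (2*d+1) * (\<delta> N + \<delta> N)"
        using \<delta>mono[OF that(1)] \<delta>mono[OF that(2)] d0 by (intro mult_left_mono) auto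
      also have "\<dots> < e^2" using \<open>4 * (2*d+1) * \<delta> N < e^2\<close> by (simp add: algebra_simps)
      finally have "(norm (s m - s n))^2 < e^2" .
      then have "norm (s m - s n) < e" using e by (simp add: power_less_imp_less_base)
      then show ?thesis by (simp add: dist_norm)
    qed
    then show "\<exists>M. \<forall>m\<ge>M. \<forall>n\<ge>M. dist (s m) (s n) < e" by blast
  qed
  then obtain m where lim: "s \<longlonglongrightarrow> m" using Cauchy_convergent convergent_def by blast
  have mM: "m \<in> M" using closed_sequentially[OF cl sM lim] .
  have "norm (x - m) \<le> d"
  proof (rule LIMSEQ_le)
    show "(\<lambda>n. norm (x - s n)) \<longlonglongrightarrow> norm (x - m)"
      by (intro tendsto_intros lim)
    show "(\<lambda>n. d + \<delta> n) \<longlonglongrightarrow> d"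
      using tendsto_add[OF tendsto_const[of d] LIMSEQ_inverse_real_of_nat] unfolding \<delta>_def by simp
    show "\<exists>N. \<forall>n\<ge>N. norm (x - s n) \<le> d + \<delta> n" using sn less_imp_le by blast
  qed
  then have minm: "norm (x - m) \<le> norm (x - m')" if "m' \<in> M" for m'
    using dle[OF that] by simp
  have "cinner (x - m) k = 0" if kM: "k \<in> M" for k
  proof (rule ccontr)
    define w where "w = x - m"
    define c where "c = cinner w k"
    assume "cinner (x - m) k \<noteq> 0"
    then have cpos: "0 < (cmod c)^2" unfolding c_def w_def by simp
    define sa where "sa = 1 / ((norm k)^2 + 1)"
    have kp: "0 < (norm k)^2 + 1" using zero_le_power2[of "norm k"] by linarith
    have sapos: "0 < sa" unfolding sa_def using kp by simp
    have sak: "sa * (norm k)^2 < 1" unfolding sa_def using kp by (simp add: field_simps)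
    define t where "t = complex_of_real sa * c"
    have "m + scaleC t k \<in> M" using add[OF mM sc[OF kM]] .
    then have "norm w \<le> norm (w - scaleC t k)" using minm unfolding w_def by (simp add: algebra_simps)
    then have "(norm w)^2 \<le> (norm (w - scaleC t k))^2" by (simp add: power_mono)
    also have "\<dots> = (norm w)^2 + (cmod t * norm k)^2 - 2 * Re (cnj t * c)"
      by (simp add: norm_diff_sq norm_scaleC cinner_scaleC_right c_def)
    also have "\<dots> = (norm w)^2 + sa^2 * (cmod c)^2 * (norm k)^2 - 2 * sa * (cmod c)^2"
    proof -
      have cc: "cnj c * c = complex_of_real ((cmod c)^2)" by (subst complex_norm_square) (rule mult.commute)
      have "cnj t * c = complex_of_real sa * (cnj c * c)" unfolding t_def by simp
      then have "cnj t * c = complex_of_real (sa * (cmod c)^2)" by (simp only: cc of_real_mult)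
      moreover have "cmod t = sa * cmod c" unfolding t_def using sapos by (simp add: norm_mult)
      ultimately show ?thesis by (simp add: power_mult_distrib)
    qed
    finally have "2 * sa * (cmod c)^2 \<le> sa * (sa * (norm k)^2) * (cmod c)^2"
      by (simp add: power2_eq_square algebra_simps)
    then have "2 \<le> sa * (norm k)^2" using sapos cpos by (simp add: mult.assoc)
    then show False using sak by simp
  qed
  then show ?thesis using mM by blast
qed



lemma riesz:
  fixes f :: "'a::chilbert_space \<Rightarrow> complex"
  assumes add: "\<And>x y. f (x + y) = f x + f y" and sc: "\<And>c x. f (scaleC c x) = c * f x"
    and bd: "\<And>x. cmod (f x) \<le> norm x * K"
  shows "\<exists>y. \<forall>x. f x = cinner x y"
proof (cases "\<forall>x. f x = 0")
  case True
  then show ?thesis by (intro exI[of _ 0]) simp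
next
  case False
  then obtain x0 where x0: "f x0 \<noteq> 0" by blast
  have bl: "bounded_linear f"
  proof (rule bounded_linear_intro[of f K])
    show "f (x + y) = f x + f y" for x y by (rule add)
    show "f (scaleR r x) = scaleR r (f x)" for r x
      using sc[of "complex_of_real r" x] by (simp add: scaleR_scaleC scaleR_conv_of_real)
    show "norm (f x) \<le> norm x * K" for x using bd by simp
  qed
  define M where "M = {x. f x = 0}"
  have f0: "f 0 = 0" using sc[of 0 0] by simp
  have clM: "closed M" unfolding M_def
    by (rule closed_Collect_eq) (auto intro: linear_continuous_on[OF bl] continuous_on_const)
  obtain m where mM: "m \<in> M" and orth: "\<And>k. k \<in> M \<Longrightarrow> cinner (x0 - m) k = 0"
    using proj_exists[OF clM, of x0] f0 add sc unfolding M_def by auto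
  define w where "w = x0 - m"
  have fw: "f w = f x0" unfolding w_def using mM bl unfolding M_def by (simp add: linear_simps(2))
  then have "w \<noteq> 0" using x0 f0 by auto
  then have ww: "cinner w w \<noteq> 0" by (simp add: cinner_eq_zero_iff)
  define y where "y = scaleC (cnj (f w / cinner w w)) w"
  have "f x = cinner x y" for x
  proof -
    define v where "v = x - scaleC (f x / f w) w"
    have "f v = f x - (f x / f w) * f w" unfolding v_def using bl by (simp add: linear_simps(2) sc)
    then have "v \<in> M" unfolding M_def using fw x0 by simp
    then have "cinner w v = 0" using orth w_def by simp
    then have "cinner v w = 0" by (subst cinner_commute) simp
    then have "cinner x w - (f x / f w) * cinner w w = 0"
      unfolding v_def by (simp add: cinner_diff_left cinner_scaleC_left)
    then have "f x = f w * cinner x w / cinner w w" using ww fw x0 by (simp add: field_simps)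
    then show ?thesis unfolding y_def by (simp add: cinner_scaleC_right)
  qed
  then show ?thesis by blast
qed

lemma adjoint_unique:
  fixes T U :: "'a::complex_inner_space \<Rightarrow> 'a"
  assumes "\<forall>x y. cinner (T x) y = cinner x (U y)"
  shows "adjoint T = U"
  unfolding adjoint_def
proof (rule the_equality)
  show "\<forall>x y. cinner (T x) y = cinner x (U y)" by (rule assms)
  fix V assume V: "\<forall>x y. cinner (T x) y = cinner x (V y)"
  show "V = U"
  proof
    fix y
    have "cinner x (V y - U y) = 0" for x using V assms by (simp add: cinner_diff_right)
    then have "cinner (V y - U y) (V y - U y) = 0" by blast
    then show "V y = U y" by (simp add: cinner_eq_zero_iff)
  qed
qed

lemma adjoint_exists:
  fixes T :: "'a::chilbert_space \<Rightarrow> 'a"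
  assumes "bounded_op T"
  shows "\<exists>U. \<forall>x y. cinner (T x) y = cinner x (U y)"
proof -
  have bl: "bounded_linear T" and hom: "\<And>c x. T (scaleC c x) = scaleC c (T x)"
    using assms unfolding bounded_op_def by auto
  obtain K where K: "\<And>x. norm (T x) \<le> norm x * K" using bounded_linear.bounded[OF bl] by blast
  have "\<exists>u. \<forall>x. cinner (T x) y = cinner x u" for y
  proof (rule riesz[where K = "K * norm y"])
    show "cinner (T (x + z)) y = cinner (T x) y + cinner (T z) y" for x z
      using bl by (simp add: linear_simps(1) cinner_add_left)
    show "cinner (T (scaleC c x)) y = c * cinner (T x) y" for c x
      by (simp add: hom cinner_scaleC_left)
    show "cmod (cinner (T x) y) \<le> norm x * (K * norm y)" for x
    proof -
      have "cmod (cinner (T x) y) \<le> norm (T x) * norm y" by (rule cinner_cs)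
      also have "\<dots> \<le> norm x * K * norm y" using K[of x] by (simp add: mult_right_mono)
      finally show ?thesis by (simp add: mult.assoc)
    qed
  qed
  then show ?thesis by metis
qed

lemma adjoint_prop:
  fixes T :: "'a::chilbert_space \<Rightarrow> 'a"
  assumes "bounded_op T"
  shows "cinner (T x) y = cinner x (adjoint T y)"
proof -
  obtain U where U: "\<forall>x y. cinner (T x) y = cinner x (U y)" using adjoint_exists[OF assms] by blast
  then show ?thesis using adjoint_unique[OF U] by simp
qed

lemma mp_inv_apply:
  fixes A :: "'a::chilbert_space \<Rightarrow> 'a"
  assumes "bounded_op A"
  shows "A (mp_inv A (A x0)) = A x0"
proof -
  have bl: "bounded_linear A" and hom: "\<And>c x. A (scaleC c x) = scaleC c (A x)"
    using assms unfolding bounded_op_def by auto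
  define M where "M = {k. A k = 0}"
  have clM: "closed M" unfolding M_def
    by (rule closed_Collect_eq) (auto intro: linear_continuous_on[OF bl] continuous_on_const)
  have A0: "A 0 = 0" using bl by (simp add: linear_simps)
  obtain m where mM: "m \<in> M" and orth: "\<And>k. k \<in> M \<Longrightarrow> cinner (x0 - m) k = 0"
    using proj_exists[OF clM, of x0] A0 bl hom unfolding M_def by (auto simp: linear_simps)
  define P where "P = (\<lambda>x. A x = A x0 \<and> (\<forall>k. A k = 0 \<longrightarrow> cinner x k = 0))"
  have Px: "P (x0 - m)" unfolding P_def using mM orth bl by (auto simp: M_def linear_simps)
  have uniq: "x = x0 - m" if "P x" for x
  proof -
    have "A (x - (x0 - m)) = 0" using that Px bl unfolding P_def by (simp add: linear_simps)
    then have "cinner x (x - (x0 - m)) = 0" "cinner (x0 - m) (x - (x0 - m)) = 0"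
      using that Px unfolding P_def by auto
    then have "cinner (x - (x0 - m)) (x - (x0 - m)) = 0" by (simp add: cinner_diff_left)
    then show ?thesis by (simp add: cinner_eq_zero_iff)
  qed
  have "(THE x. P x) = x0 - m" using Px uniq by (rule the_equality)
  then have "mp_inv A (A x0) = x0 - m" unfolding mp_inv_def P_def by auto
  then show ?thesis using Px unfolding P_def by simp
qed



lemma pos_bl: "positive_op A \<Longrightarrow> bounded_linear A"
  unfolding positive_op_def bounded_op_def by auto
lemma pos_hom: "positive_op A \<Longrightarrow> A (scaleC c x) = scaleC c (A x)"
  unfolding positive_op_def bounded_op_def by auto
lemma pos_Im: "positive_op A \<Longrightarrow> Im (cinner (A x) x) = 0"
  unfolding positive_op_def by auto
lemma pos_Re: "positive_op A \<Longrightarrow> 0 \<le> Re (cinner (A x) x)"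
  unfolding positive_op_def by auto

lemma pos_selfadj:
  fixes A :: "'a::complex_inner_space \<Rightarrow> 'a"
  assumes pA: "positive_op A"
  shows "cinner (A x) y = cinner x (A y)"
proof -
  have bl: "bounded_linear A" using pos_bl[OF pA] .
  define \<alpha> where "\<alpha> = cinner (A x) y"
  define \<beta> where "\<beta> = cinner (A y) x"
  have "cinner (A (x + y)) (x + y) = cinner (A x) x + cinner (A y) y + \<alpha> + \<beta>"
    unfolding \<alpha>_def \<beta>_def using bl by (simp add: linear_simps cinner_add_left cinner_add_right)
  then have h1: "Im \<alpha> + Im \<beta> = 0" using pos_Im[OF pA, of "x + y"] pos_Im[OF pA, of x] pos_Im[OF pA, of y]
    by simp
  have "cinner (A (x + scaleC \<i> y)) (x + scaleC \<i> y) = cinner (A x) x + cinner (A y) y - \<i> * \<alpha> + \<i> * \<beta>"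
    unfolding \<alpha>_def \<beta>_def using bl
    by (simp add: linear_simps cinner_add_left cinner_add_right pos_hom[OF pA] cinner_scaleC_left cinner_scaleC_right algebra_simps)
  then have h2: "Re \<alpha> = Re \<beta>" using pos_Im[OF pA, of "x + scaleC \<i> y"] pos_Im[OF pA, of x] pos_Im[OF pA, of y]
    by simp
  have "\<alpha> = cnj \<beta>" using h1 h2 by (simp add: complex_eq_iff)
  then show ?thesis unfolding \<alpha>_def \<beta>_def by (subst cinner_commute[of x]) simp
qed

context
  fixes A :: "'a::complex_inner_space \<Rightarrow> 'a"
  assumes pA: "positive_op A"
begin

lemma innerA_herm: "innerA A x y = cnj (innerA A y x)"
  unfolding innerA_def by (subst cinner_commute) (simp add: pos_selfadj[OF pA])
lemma innerA_addL: "innerA A (x + y) z = innerA A x z + innerA A y z"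
  unfolding innerA_def using pos_bl[OF pA] by (simp add: linear_simps cinner_add_left)
lemma innerA_scL: "innerA A (scaleC c x) y = c * innerA A x y"
  unfolding innerA_def by (simp add: pos_hom[OF pA] cinner_scaleC_left)
lemma innerA_pos: "0 \<le> Re (innerA A x x)"
  unfolding innerA_def by (rule pos_Re[OF pA])
lemma innerA_addR: "innerA A z (x + y) = innerA A z x + innerA A z y"
  unfolding innerA_def by (simp add: cinner_add_right)
lemma innerA_scR: "innerA A x (scaleC c y) = cnj c * innerA A x y"
  unfolding innerA_def by (simp add: cinner_scaleC_right)
lemma innerA_scaleR_L: "innerA A (scaleR r x) y = complex_of_real r * innerA A x y"
  by (simp add: scaleR_scaleC innerA_scL)
lemma innerA_scaleR_R: "innerA A x (scaleR r y) = complex_of_real r * innerA A x y"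
  by (simp add: scaleR_scaleC innerA_scR)

lemma csA: "cmod (innerA A x y) \<le> normA A x * normA A y"
  unfolding normA_def
  by (rule cs_sqrt[where B = "innerA A", OF innerA_herm innerA_addL innerA_scL innerA_pos])

lemma innerA_self: "innerA A x x = complex_of_real ((normA A x)^2)"
  using pos_Im[OF pA, of x] pos_Re[OF pA, of x] unfolding normA_def innerA_def
  by (simp add: complex_eq_iff innerA_def)

lemma normA_nonneg: "0 \<le> normA A x"
  unfolding normA_def using innerA_pos[of x] by simp

lemma normA_sq: "(normA A x)^2 = Re (innerA A x x)"
  using innerA_pos[of x] unfolding normA_def by simp

lemma innerA_eqL: "A u = A v \<Longrightarrow> innerA A u z = innerA A v z"
  unfolding innerA_def by simp
lemma innerA_eqR: "A u = A v \<Longrightarrow> innerA A z u = innerA A z v"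
  unfolding innerA_def by (simp add: pos_selfadj[OF pA])
lemma normA_eq: "A u = A v \<Longrightarrow> normA A u = normA A v"
  unfolding normA_def using innerA_eqL[of u v u] innerA_eqR[of u v v] by simp

lemma normA_bound: "\<exists>KA\<ge>0. \<forall>y. normA A y \<le> KA * norm y"
proof -
  obtain K where K: "K > 0" "\<And>y. norm (A y) \<le> norm y * K"
    using bounded_linear.pos_bounded[OF pos_bl[OF pA]] by blast
  have "(normA A y)^2 \<le> (sqrt K * norm y)^2" for y
  proof -
    have "(normA A y)^2 = Re (cinner (A y) y)" by (simp add: normA_sq innerA_def)
    also have "\<dots> \<le> cmod (cinner (A y) y)" by (rule complex_Re_le_cmod)
    also have "\<dots> \<le> norm (A y) * norm y" by (rule cinner_cs)
    also have "\<dots> \<le> norm y * K * norm y" using K(2)[of y] by (simp add: mult_right_mono)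
    also have "\<dots> = (sqrt K * norm y)^2" using K(1) by (simp add: power_mult_distrib power2_eq_square)
    finally show ?thesis .
  qed
  then have "normA A y \<le> sqrt K * norm y" for y
  proof -
    have "0 \<le> sqrt K * norm y" using K(1) by simp
    then show ?thesis using power2_le_imp_le[OF \<open>(normA A y)^2 \<le> (sqrt K * norm y)^2\<close>] by simp
  qed
  then show ?thesis using K(1) by (intro exI[of _ "sqrt K"]) auto
qed

end



lemma pow_unbounded:
  fixes r C :: real
  assumes r: "r > 1" and bnd: "\<And>n. r ^ (2 ^ n) \<le> C"
  shows False
proof -
  obtain n where n: "C / (r - 1) < real n" using reals_Archimedean2 by blast
  have "1 + real (2^n) * (r - 1) \<le> (1 + (r - 1)) ^ (2^n)"
    by (rule Bernoulli_inequality) (use r in simp)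
  then have b: "1 + real (2^n) * (r - 1) \<le> r ^ (2^n)" by simp
  have "real n \<le> real (2^n)" by (simp add: less_imp_le) 
  then have "real n * (r - 1) \<le> real (2^n) * (r - 1)" using r by (intro mult_right_mono) auto
  moreover have "C < real n * (r - 1)" using n r by (simp add: field_simps)
  ultimately show False using b bnd[of n] by linarith
qed

lemma A_bounded:
  fixes A S R :: "'a::complex_inner_space \<Rightarrow> 'a"
  assumes pA: "positive_op A" and bS: "bounded_linear S" and bR: "bounded_linear R"
    and adj: "\<And>x y. innerA A (S x) y = innerA A x (R y)"
  shows "\<exists>C\<ge>0. \<forall>x. normA A (S x) \<le> C * normA A x"
proof -
  define P where "P = (\<lambda>x. R (S x))"
  have blP: "bounded_linear P" unfolding P_def using bounded_linear_compose[OF bR bS] by (simp add: o_def)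
  obtain Kp where Kp: "Kp > 0" "\<And>y. norm (P y) \<le> norm y * Kp"
    using bounded_linear.pos_bounded[OF blP] by blast
  obtain KA where KA: "KA \<ge> 0" "\<And>y. normA A y \<le> KA * norm y" using normA_bound[OF pA] by blast
  have Rsym: "innerA A (R x) y = innerA A x (S y)" for x y
    using innerA_herm[OF pA, of "R x" y] adj[of y x] innerA_herm[OF pA, of x "S y"] by simp
  have Psym: "innerA A (P x) y = innerA A x (P y)" for x y
    unfolding P_def using Rsym adj by simp
  have Psym_pow: "innerA A ((P ^^ m) x) y = innerA A x ((P ^^ m) y)" for m x y
  proof (induction m arbitrary: x y)
    case 0 then show ?case by simp
  next
    case (Suc m)
    have "innerA A ((P ^^ Suc m) x) y = innerA A (P ((P ^^ m) x)) y" by simp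
    also have "\<dots> = innerA A ((P ^^ m) x) (P y)" by (rule Psym)
    also have "\<dots> = innerA A x ((P ^^ m) (P y))" by (rule Suc.IH)
    also have "(P ^^ m) (P y) = (P ^^ Suc m) y" by (simp add: funpow_Suc_right del: funpow.simps)
    finally show ?case .
  qed
  have Ppow_norm: "norm ((P ^^ m) y) \<le> Kp ^ m * norm y" for m y
  proof (induction m)
    case 0 then show ?case by simp
  next
    case (Suc m)
    have "norm ((P ^^ Suc m) y) \<le> norm ((P ^^ m) y) * Kp" using Kp(2) by simp
    also have "\<dots> \<le> Kp ^ m * norm y * Kp" using Suc.IH Kp(1) by (intro mult_right_mono) auto
    finally show ?case by (simp add: algebra_simps)
  qed
  have Pbound: "normA A (P x) \<le> Kp * normA A x" for x
  proof -
    define b where "b = normA A x"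
    define a where "a = (\<lambda>k::nat. normA A ((P ^^ (2 ^ k)) x))"
    have b0: "0 \<le> b" unfolding b_def by (rule normA_nonneg[OF pA])
    have a0: "0 \<le> a k" for k unfolding a_def by (rule normA_nonneg[OF pA])
    have rec: "(a k)^2 \<le> a (Suc k) * b" for k
    proof -
      define Q where "Q = P ^^ (2 ^ k)"
      have QQ: "Q (Q x) = (P ^^ (2 ^ Suc k)) x"
        unfolding Q_def by (simp add: funpow_add mult_2)
      have "(a k)^2 = Re (innerA A (Q x) (Q x))" unfolding a_def Q_def by (rule normA_sq[OF pA])
      also have "innerA A (Q x) (Q x) = innerA A x (Q (Q x))" unfolding Q_def by (rule Psym_pow)
      also have "Re (innerA A x (Q (Q x))) \<le> cmod (innerA A x (Q (Q x)))" by (rule complex_Re_le_cmod)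
      also have "\<dots> \<le> normA A x * normA A (Q (Q x))" by (rule csA[OF pA])
      also have "\<dots> = a (Suc k) * b" unfolding a_def b_def QQ by simp
      finally show ?thesis .
    qed
    have chain: "(a 0)^(2^n) * b \<le> a n * b^(2^n)" for n
    proof (induction n)
      case 0 then show ?case by (simp add: mult.commute)
    next
      case (Suc n)
      have nn: "0 \<le> (a 0)^(2^n) * b" using a0 b0 by simp
      have "((a 0)^(2^n) * b)^2 \<le> (a n * b^(2^n))^2" using Suc.IH nn by (intro power_mono) auto
      then have "(a 0)^(2^Suc n) * b^2 \<le> (a n)^2 * b^(2^Suc n)"
        by (simp add: power_mult_distrib power_mult[symmetric] mult.commute)
      also have "\<dots> \<le> a (Suc n) * b * b^(2^Suc n)" using rec[of n] b0 by (intro mult_right_mono) auto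
      finally have *: "(a 0)^(2^Suc n) * b^2 \<le> a (Suc n) * b^(2^Suc n) * b" by (simp add: algebra_simps)
      show ?case
      proof (cases "b = 0")
        case True then show ?thesis using a0[of "Suc n"] by simp
      next
        case False
        then have "0 < b" using b0 by simp
        then show ?thesis using * by (simp add: power2_eq_square mult.assoc[symmetric])
      qed
    qed
    show ?thesis
    proof (cases "b = 0")
      case True
      have "(a 0)^2 \<le> 0" using rec[of 0] True by simp
      then have "a 0 = 0" using a0[of 0] by simp
      then show ?thesis unfolding a_def b_def using True b_def by simp
    next
      case False
      then have bp: "0 < b" using b0 by simp
      define r where "r = a 0 / (Kp * b)"
      define C where "C = KA * norm x / b"
      have "r ^ (2^n) \<le> C" for n
      proof -
        have "a n \<le> KA * (Kp ^ (2^n) * norm x)"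
        proof -
          have "a n \<le> KA * norm ((P ^^ (2^n)) x)" unfolding a_def by (rule KA(2))
          also have "\<dots> \<le> KA * (Kp ^ (2^n) * norm x)" using KA(1) Ppow_norm by (intro mult_left_mono) auto
          finally show ?thesis .
        qed
        then have "(a 0)^(2^n) * b \<le> KA * (Kp ^ (2^n) * norm x) * b^(2^n)"
          using chain[of n] bp by (meson order_trans mult_right_mono zero_le_power less_imp_le)
        then have "(a 0)^(2^n) \<le> C * (Kp * b)^(2^n)"
          unfolding C_def using bp by (simp add: field_simps power_mult_distrib)
        then show ?thesis unfolding r_def using bp Kp(1) by (simp add: power_divide field_simps)
      qed
      then have "r \<le> 1" using pow_unbounded[of r C] by force
      then have "a 0 \<le> Kp * b" unfolding r_def using bp Kp(1) by (simp add: field_simps)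
      then show ?thesis unfolding a_def b_def by simp
    qed
  qed
  have "normA A (S x) \<le> sqrt Kp * normA A x" for x
  proof -
    have "(normA A (S x))^2 = Re (innerA A (S x) (S x))" by (rule normA_sq[OF pA])
    also have "\<dots> = Re (innerA A x (P x))" unfolding P_def by (simp add: adj)
    also have "\<dots> \<le> cmod (innerA A x (P x))" by (rule complex_Re_le_cmod)
    also have "\<dots> \<le> normA A x * normA A (P x)" by (rule csA[OF pA])
    also have "\<dots> \<le> normA A x * (Kp * normA A x)" using Pbound normA_nonneg[OF pA] by (intro mult_left_mono) auto
    also have "\<dots> = (sqrt Kp * normA A x)^2" using Kp(1) by (simp add: power_mult_distrib power2_eq_square)
    finally have "(normA A (S x))^2 \<le> (sqrt Kp * normA A x)^2" .
    moreover have "0 \<le> sqrt Kp * normA A x" using Kp(1) normA_nonneg[OF pA] by simp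
    ultimately show ?thesis by (rule power2_le_imp_le)
  qed
  then show ?thesis using Kp(1) by (intro exI[of _ "sqrt Kp"]) auto
qed



lemma sup0_upper:
  fixes X :: "real set"
  assumes "\<And>x. x \<in> X \<Longrightarrow> x \<le> M" "y \<in> X"
  shows "y \<le> Sup (insert 0 X)"
proof (rule cSup_upper)
  show "y \<in> insert 0 X" using assms(2) by simp
  show "bdd_above (insert 0 X)" using assms(1) by (intro bdd_aboveI[of _ "max 0 M"]) force
qed

lemma sup0_nonneg:
  fixes X :: "real set"
  assumes "\<And>x. x \<in> X \<Longrightarrow> x \<le> M"
  shows "0 \<le> Sup (insert 0 X)"
proof (rule cSup_upper)
  show "(0::real) \<in> insert 0 X" by simp
  show "bdd_above (insert 0 X)" using assms(1) by (intro bdd_aboveI[of _ "max 0 M"]) force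
qed

lemma sup0_least:
  fixes X :: "real set"
  assumes "\<And>x. x \<in> X \<Longrightarrow> x \<le> M" "0 \<le> M"
  shows "Sup (insert 0 X) \<le> M"
  using assms by (intro cSup_least) auto

lemma bl_scaleC: "bounded_linear (\<lambda>x::'a::complex_inner_space. scaleC e x)"
proof (rule bounded_linear_intro[where K = "cmod e"])
  show "scaleC e (x + y) = scaleC e x + scaleC e y" for x y :: 'a by (rule scaleC_add_right)
  show "scaleC e (scaleR r x) = scaleR r (scaleC e x)" for r and x :: 'a by (rule scaleC_scaleR_comm)
  show "norm (scaleC e x) \<le> norm x * cmod e" for x :: 'a by (simp add: norm_scaleC mult.commute)
qed

lemma bounded_op_rot:
  fixes S :: "'a::complex_inner_space \<Rightarrow> 'a"
  assumes "bounded_op S"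
  shows "bounded_op (\<lambda>x. scaleC e (S x))"
proof -
  have bl: "bounded_linear S" and hom: "\<And>c x. S (scaleC c x) = scaleC c (S x)"
    using assms unfolding bounded_op_def by auto
  have "bounded_linear (\<lambda>x. scaleC e (S x))"
    using bounded_linear_compose[OF bl_scaleC bl] by (simp add: o_def)
  moreover have "scaleC e (S (scaleC c x)) = scaleC c (scaleC e (S x))" for c x
    by (simp add: hom scaleC_scaleC mult.commute)
  ultimately show ?thesis unfolding bounded_op_def by auto
qed

lemma BA_props:
  fixes A S :: "'a::chilbert_space \<Rightarrow> 'a"
  assumes pA: "positive_op A" and SB: "S \<in> BA A"
  obtains R where "bounded_op R" "\<And>x y. innerA A (S x) y = innerA A x (R y)"
    "\<And>y. A (sharpA A S y) = A (R y)"
proof -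
  obtain R where bS: "bounded_op S" and bR: "bounded_op R" and AR: "A \<circ> R = adjoint S \<circ> A"
    using SB unfolding BA_def by auto
  have hAR: "adjoint S (A y) = A (R y)" for y using fun_cong[OF AR, of y] by simp
  have bA: "bounded_op A" using pA unfolding positive_op_def by simp
  have "innerA A (S x) y = innerA A x (R y)" for x y
  proof -
    have "innerA A (S x) y = cinner (S x) (A y)" unfolding innerA_def by (rule pos_selfadj[OF pA])
    also have "\<dots> = cinner x (adjoint S (A y))" by (rule adjoint_prop[OF bS])
    also have "\<dots> = cinner (A x) (R y)" by (simp add: hAR pos_selfadj[OF pA])
    finally show ?thesis unfolding innerA_def .
  qed
  moreover have "A (sharpA A S y) = A (R y)" for y
    unfolding sharpA_def using mp_inv_apply[OF bA, of "R y"] by (simp add: hAR)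
  ultimately show ?thesis using bR that by blast
qed

lemma BA_rot:
  fixes A S :: "'a::chilbert_space \<Rightarrow> 'a"
  assumes pA: "positive_op A" and SB: "S \<in> BA A"
  shows "(\<lambda>x. scaleC e (S x)) \<in> BA A"
proof -
  obtain R where bS: "bounded_op S" and bR: "bounded_op R" and AR: "A \<circ> R = adjoint S \<circ> A"
    using SB unfolding BA_def by auto
  have adjT: "adjoint (\<lambda>x. scaleC e (S x)) = (\<lambda>y. scaleC (cnj e) (adjoint S y))"
    by (rule adjoint_unique) (simp add: cinner_scaleC_left cinner_scaleC_right adjoint_prop[OF bS])
  have "A \<circ> (\<lambda>y. scaleC (cnj e) (R y)) = adjoint (\<lambda>x. scaleC e (S x)) \<circ> A"
  proof
    fix y
    have "A (R y) = adjoint S (A y)" using fun_cong[OF AR, of y] by simp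
    then show "(A \<circ> (\<lambda>y. scaleC (cnj e) (R y))) y = (adjoint (\<lambda>x. scaleC e (S x)) \<circ> A) y"
      by (simp add: adjT pos_hom[OF pA])
  qed
  then show ?thesis unfolding BA_def using bounded_op_rot[OF bS] bounded_op_rot[OF bR] by blast
qed

lemma half_add_cnj: "complex_of_real (1/2) * (w + cnj w) = complex_of_real (Re w)"
  by (simp add: complex_eq_iff)

lemma cmod_add_real_sq: "(cmod (w + complex_of_real n))^2 = (cmod w)^2 + 2 * n * Re w + n^2"
  by (simp only: cmod_power2) (simp add: power2_eq_square algebra_simps)

theorem theorem2p13:
  fixes A S :: "'a::chilbert_space \<Rightarrow> 'a" and \<theta> :: real
  assumes "positive_op A" and "S \<in> BA A"
  shows "(domegaA A S)\<^sup>2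
    \<le> (omegaA A (\<lambda>x. scaleC (exp (\<i> * complex_of_real \<theta>)) (S x) + sharpA A S (S x)))\<^sup>2
       + 2 * (opnormA A S)\<^sup>2 * opnormA A (ReA A (\<lambda>x. scaleC (exp (\<i> * complex_of_real \<theta>)) (S x)))"
proof -
  note pA = assms(1)
  define e where "e = exp (\<i> * complex_of_real \<theta>)"
  have e1: "cmod e = 1" unfolding e_def by simp
  define T where "T = (\<lambda>x. scaleC e (S x))"
  define V where "V = (\<lambda>x. scaleC e (S x) + sharpA A S (S x))"
  obtain R where bR: "bounded_op R" and adjS: "\<And>x y. innerA A (S x) y = innerA A x (R y)"
    and shS: "\<And>y. A (sharpA A S y) = A (R y)"
    using BA_props[OF pA assms(2)] by blast
  have TB: "T \<in> BA A" unfolding T_def by (rule BA_rot[OF pA assms(2)])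
  obtain RT where bRT: "bounded_op RT" and adjT: "\<And>x y. innerA A (T x) y = innerA A x (RT y)"
    and shT: "\<And>y. A (sharpA A T y) = A (RT y)"
    using BA_props[OF pA TB] by blast
  have bS: "bounded_op S" using assms(2) unfolding BA_def by auto
  have blS: "bounded_linear S" and blR: "bounded_linear R" and blRT: "bounded_linear RT"
    using bS bR bRT unfolding bounded_op_def by auto
  have blT: "bounded_linear T" using bounded_op_rot[OF bS] unfolding T_def bounded_op_def by auto
  have blA: "bounded_linear A" by (rule pos_bl[OF pA])
  obtain CS where CS: "CS \<ge> 0" "\<And>x. normA A (S x) \<le> CS * normA A x"
    using A_bounded[OF pA blS blR adjS] by blast
  define Q where "Q = (\<lambda>z. scaleR (1/2) (T z + RT z))"
  have blQ: "bounded_linear Q" unfolding Q_def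
    using bounded_linear_compose[OF bounded_linear_scaleR_right bounded_linear_add[OF blT blRT]] by (simp add: o_def)
  have RTsym: "innerA A (RT x) y = innerA A x (T y)" for x y
    using innerA_herm[OF pA, of "RT x" y] adjT[of y x] innerA_herm[OF pA, of x "T y"] by simp
  have Qsym: "innerA A (Q x) y = innerA A x (Q y)" for x y
    unfolding Q_def by (simp add: innerA_scaleR_L[OF pA] innerA_scaleR_R[OF pA] innerA_addL[OF pA]
        innerA_addR[OF pA] adjT RTsym algebra_simps)
  obtain CQ where CQ: "CQ \<ge> 0" "\<And>x. normA A (Q x) \<le> CQ * normA A x"
    using A_bounded[OF pA blQ blQ Qsym] by blast
  have AReQ: "A (ReA A T z) = A (Q z)" for z
    unfolding ReA_def Q_def using blA by (simp add: linear_simps shT)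
  have innV: "innerA A (V z) z = e * innerA A (S z) z + complex_of_real ((normA A (S z))^2)" for z
  proof -
    have "innerA A (sharpA A S (S z)) z = innerA A (R (S z)) z" by (rule innerA_eqL[OF pA shS])
    also have "\<dots> = cnj (innerA A z (R (S z)))" by (rule innerA_herm[OF pA])
    also have "\<dots> = cnj (innerA A (S z) (S z))" by (simp add: adjS)
    also have "\<dots> = complex_of_real ((normA A (S z))^2)" by (simp add: innerA_self[OF pA])
    finally show ?thesis unfolding V_def by (simp add: innerA_addL[OF pA] innerA_scL[OF pA])
  qed
  have innRe: "innerA A (ReA A T z) z = complex_of_real (Re (e * innerA A (S z) z))" for z
  proof -
    have Tz: "innerA A (T z) z = e * innerA A (S z) z" unfolding T_def by (simp add: innerA_scL[OF pA])
    have "innerA A (sharpA A T z) z = innerA A (RT z) z" by (rule innerA_eqL[OF pA shT])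
    also have "\<dots> = cnj (innerA A z (RT z))" by (rule innerA_herm[OF pA])
    also have "\<dots> = cnj (innerA A (T z) z)" by (simp add: adjT)
    finally have sh: "innerA A (sharpA A T z) z = cnj (e * innerA A (S z) z)" using Tz by simp
    have "innerA A (ReA A T z) z = complex_of_real (1/2) * (innerA A (T z) z + innerA A (sharpA A T z) z)"
      unfolding ReA_def by (simp add: innerA_scaleR_L[OF pA] innerA_addL[OF pA])
    also have "\<dots> = complex_of_real (1/2) * (e * innerA A (S z) z + cnj (e * innerA A (S z) z))"
      using Tz sh by simp
    also have "\<dots> = complex_of_real (Re (e * innerA A (S z) z))"
      by (rule half_add_cnj)
    finally show ?thesis .
  qed
  define XS where "XS = {normA A (S z) | z. normA A z = 1}"
  define XR where "XR = {normA A (ReA A T z) | z. normA A z = 1}"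
  define XV where "XV = {cmod (innerA A (V z) z) | z. normA A z = 1}"
  have XSb: "x \<le> CS" if xin: "x \<in> XS" for x
  proof -
    obtain z where z: "normA A z = 1" and x: "x = normA A (S z)" using xin XS_def by auto
    show ?thesis using CS(2)[of z] z x by simp
  qed
  have XRb: "x \<le> CQ" if xin: "x \<in> XR" for x
  proof -
    obtain z where z: "normA A z = 1" and x: "x = normA A (ReA A T z)" using xin XR_def by auto
    show ?thesis using CQ(2)[of z] z x normA_eq[OF pA AReQ[of z]] by simp
  qed
  have XVb: "x \<le> CS + CS^2" if xin: "x \<in> XV" for x
  proof -
    obtain z where z: "normA A z = 1" and x: "x = cmod (innerA A (V z) z)" using xin XV_def by auto
    have nS: "normA A (S z) \<le> CS" using CS(2)[of z] z by simp
    have "x \<le> cmod (e * innerA A (S z) z) + cmod (complex_of_real ((normA A (S z))^2))"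
      unfolding x innV by (rule norm_triangle_ineq)
    also have "\<dots> = cmod (innerA A (S z) z) + (normA A (S z))^2"
      by (simp add: norm_mult e1 norm_power del: of_real_power)
    also have "\<dots> \<le> normA A (S z) * normA A z + (normA A (S z))^2"
      using csA[OF pA] by simp
    also have "\<dots> \<le> CS + CS^2" using nS z normA_nonneg[OF pA, of "S z"]
      by (simp add: power_mono add_mono)
    finally show ?thesis .
  qed
  have opS_def': "opnormA A S = Sup (insert 0 XS)" unfolding opnormA_def XS_def by simp
  have opR_def': "opnormA A (ReA A T) = Sup (insert 0 XR)" unfolding opnormA_def XR_def by simp
  have om_def': "omegaA A V = Sup (insert 0 XV)" unfolding omegaA_def XV_def by simp
  have opS0: "0 \<le> opnormA A S" unfolding opS_def' by (rule sup0_nonneg[OF XSb])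
  have opR0: "0 \<le> opnormA A (ReA A T)" unfolding opR_def' by (rule sup0_nonneg[OF XRb])
  have om0: "0 \<le> omegaA A V" unfolding om_def' by (rule sup0_nonneg[OF XVb])
  define RHS where "RHS = (omegaA A V)^2 + 2 * (opnormA A S)^2 * opnormA A (ReA A T)"
  have RHS0: "0 \<le> RHS" unfolding RHS_def using opS0 opR0 by simp
  have elem: "(cmod (innerA A (S z) z))^2 + (normA A (S z))^4 \<le> RHS" if z: "normA A z = 1" for z
  proof -
    define a where "a = innerA A (S z) z"
    define n where "n = (normA A (S z))^2"
    define w where "w = e * a"
    have n0: "0 \<le> n" unfolding n_def by simp
    have cw: "cmod w = cmod a" unfolding w_def by (simp add: norm_mult e1)
    have V1: "cmod (w + complex_of_real n) \<le> omegaA A V"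
      unfolding om_def' w_def a_def n_def innV[symmetric]
      by (rule sup0_upper[OF XVb]) (use z XV_def in auto)
    have nS: "n \<le> (opnormA A S)^2"
    proof -
      have "normA A (S z) \<le> opnormA A S" unfolding opS_def'
        by (rule sup0_upper[OF XSb]) (use z XS_def in auto)
      then show ?thesis unfolding n_def using normA_nonneg[OF pA, of "S z"] by (simp add: power_mono)
    qed
    have ReB: "\<bar>Re w\<bar> \<le> opnormA A (ReA A T)"
    proof -
      have "\<bar>Re w\<bar> = cmod (innerA A (ReA A T z) z)" unfolding innRe norm_of_real w_def a_def by (rule refl)
      also have "\<dots> \<le> normA A (ReA A T z) * normA A z" by (rule csA[OF pA])
      also have "\<dots> = normA A (ReA A T z)" using z by simp
      also have "\<dots> \<le> opnormA A (ReA A T)" unfolding opR_def'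
        by (rule sup0_upper[OF XRb]) (use z XR_def in auto)
      finally show ?thesis .
    qed
    have "(cmod a)^2 + n^2 = (cmod (w + complex_of_real n))^2 - 2 * n * Re w"
      using cmod_add_real_sq[of w n] cw by simp
    also have "\<dots> \<le> (omegaA A V)^2 + 2 * n * \<bar>Re w\<bar>"
    proof -
      have "(cmod (w + complex_of_real n))^2 \<le> (omegaA A V)^2" using V1 by (simp add: power_mono)
      moreover have "- (n * Re w) \<le> n * \<bar>Re w\<bar>" using n0
        by (metis abs_ge_minus_self minus_mult_right mult_left_mono)
      ultimately show ?thesis by linarith
    qed
    also have "\<dots> \<le> RHS" unfolding RHS_def
      using mult_mono[OF nS ReB] n0 opS0 by (simp add: mult.assoc)
    finally show ?thesis unfolding a_def n_def by (simp add: power_mult[symmetric])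
  qed
  have "domegaA A S \<le> sqrt RHS"
    unfolding domegaA_def
  proof (rule sup0_least)
    show "0 \<le> sqrt RHS" using RHS0 by simp
    fix x assume "x \<in> {sqrt ((cmod (innerA A (S z) z))\<^sup>2 + normA A (S z) ^ 4) |z. normA A z = 1}"
    then obtain z where z: "normA A z = 1" and x: "x = sqrt ((cmod (innerA A (S z) z))\<^sup>2 + normA A (S z) ^ 4)"
      by auto
    show "x \<le> sqrt RHS" unfolding x using elem[OF z] by simp
  qed
  moreover have "0 \<le> domegaA A S"
    unfolding domegaA_def
  proof (rule sup0_nonneg)
    fix x assume "x \<in> {sqrt ((cmod (innerA A (S z) z))\<^sup>2 + normA A (S z) ^ 4) |z. normA A z = 1}"
    then obtain z where z: "normA A z = 1" and x: "x = sqrt ((cmod (innerA A (S z) z))\<^sup>2 + normA A (S z) ^ 4)"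
      by auto
    show "x \<le> sqrt RHS" unfolding x using elem[OF z] by simp
  qed
  ultimately have "(domegaA A S)^2 \<le> (sqrt RHS)^2" by (simp add: power_mono)
  then show ?thesis using RHS0 unfolding RHS_def V_def T_def e_def by simp
qed


end
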